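(* Let $X$ be a pointed manifold, $f:X\to\mathbb{R}$ a Morse function, $\{m_{x,y}\in C_{|x|-|y|-1}(\Omega X),\ x,y\in\mathrm{Crit}(f)\}$ a twisting cocycle and $(\mathcal{A},\{\nu_n\})$ an $\mathcal{A}_\infty$-module over $C_*(\Omega X)$. Then $\partial=\sum_{n\ge0}(\nu_{n+1}\otimes1)\tilde{\mathbf m}^n$ is a differential (of degree $-1$, with $\partial^2=0$) on $C_*(X,m_{x,y},\mathcal{A})=\mathcal{A}\otimes\mathbb{Z}\mathrm{Crit}(f)$.
   Context: $C_*(\Omega X)$: normalized cubical chains on Moore loops based at the basepoint, an $\mathcal{A}_\infty$-algebra with $\mu_1$ = differential, $\mu_2$ = Pontryagin product, $\mu_i=0$ for $i\ge3$. Koszul sign rule: $(f\otimes g)(x\otimes y)=(-1)^{|g||x|}f(x)\otimes g(y)$. A twisting cocycle satisfies $\partial m_{x,y}=\sum_z(-1)^{|x|-|z|}m_{x,z}m_{z,y}$. An $\mathcal{A}_\infty$-module over $C_*(\Omega X)$ is a graded $\mathbb{Z}$-module $\mathcal{A}$ with maps $\nu_n:\mathcal{A}\otimes C_*(\Omega X)^{\otimes n-1}\to\mathcal{A}$ of degree $n-2$ ($\nu_1$ a differential) satisfying, for all $N\ge1$, $\sum_{s+t=N,s\ge1}(-1)^{st}\nu_{t+1}(\nu_s\otimes1^{\otimes t})+\sum_{r+s+t=N,r,s\ge1}(-1)^{r+st}\nu_{r+t+1}(1^{\otimes r}\otimes\mu_s\otimes1^{\otimes t})=0$. With $\mathbf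 m(x)=\sum_y m_{x,y}\otimes y$, $\tilde{\mathbf m}$ is the degree $-1$ endomorphism of $\mathcal{A}\otimes TC_*(\Omega X)\otimes\mathbb{Z}\mathrm{Crit}(f)$ (where $TC_*(\Omega X)=\bigoplus_{i\ge0}C_*(\Omega X)^{\otimes i}$) given by $\tilde{\mathbf m}(\alpha\otimes\gamma_1\otimes\cdots\otimes\gamma_k\otimes x)=(1^{\otimes k+1}\otimes\mathbf m)(\alpha\otimes\gamma_1\otimes\cdots\otimes\gamma_k\otimes x)$. *)

theory Defs
  imports Main
begin

definition sgn1 :: "int \<Rightarrow> int" where
  "sgn1 k = (if even k then 1 else -1)"

definition zmult :: "int \<Rightarrow> 'a::ab_group_add \<Rightarrow> 'a" where
  "zmult c v = (if 0 \<le> c then (\<Sum>i<nat c. v) else - (\<Sum>i<nat (- c). v))"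

text \<open>A graded Z-module: the ambient abelian group is the internal direct sum
  of the subgroups G k, k in Z (G k = homogeneous elements of degree k).\<close>
definition graded_group :: "(int \<Rightarrow> 'a::ab_group_add set) \<Rightarrow> bool" where
  "graded_group G \<longleftrightarrow>
     (\<forall>k. 0 \<in> G k \<and> (\<forall>a\<in>G k. \<forall>b\<in>G k. a + b \<in> G k \<and> - a \<in> G k)) \<and>
     (\<forall>v. \<exists>S f. finite S \<and> (\<forall>k\<in>S. f k \<in> G k) \<and> v = sum f S) \<and>
     (\<forall>S f. finite S \<longrightarrow> (\<forall>k\<in>S. f k \<in> G k) \<longrightarrow> sum f S = 0 \<longrightarrow> (\<forall>k\<in>S. f k = 0))"

definition homog_list :: "(int \<Rightarrow> 'a set) \<Rightarrow> 'a list \<Rightarrow> int list \<Rightarrow> bool" where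
  "homog_list G xs qs \<longleftrightarrow> length qs = length xs \<and> (\<forall>i<length xs. xs ! i \<in> G (qs ! i))"

fun mu :: "('c::ring \<Rightarrow> 'c) \<Rightarrow> 'c list \<Rightarrow> 'c" where
  "mu d [a] = d a"
| "mu d [a, b] = a * b"
| "mu d _ = 0"

text \<open>Left-hand side of the N-th A-infinity algebra relation
  sum_{r+s+t=N, s>=1} (-1)^{r+st} mu_{r+t+1}(1^r (x) mu_s (x) 1^t),
  evaluated (with the Koszul rule) on a homogeneous elementary tensor
  g_1 (x) ... (x) g_N of degrees q_1..q_N. mu_s has degree s-2.\<close>
definition ainf_alg_rel :: "('c::ring \<Rightarrow> 'c) \<Rightarrow> 'c list \<Rightarrow> int list \<Rightarrow> 'c" where
  "ainf_alg_rel d gs qs =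
     (let N = length gs in
      \<Sum>r\<in>{0..N}. \<Sum>s\<in>{1..N - r}.
        zmult (sgn1 (int r + int s * int (N - r - s)) *
               sgn1 ((int s - 2) * sum_list (take r qs)))
              (mu d (take r gs @ [mu d (take s (drop r gs))] @ drop (r + s) gs)))"

text \<open>(C, mu_1 = d, mu_2 = product, mu_i = 0 for i>=3) is an A-infinity algebra
  (graded by GC, concentrated in non-negative degrees, as chains are).\<close>
definition ainf_algebra :: "(int \<Rightarrow> 'c::ring set) \<Rightarrow> ('c \<Rightarrow> 'c) \<Rightarrow> bool" where
  "ainf_algebra GC d \<longleftrightarrow>
     graded_group GC \<and>
     (\<forall>k<0. GC k = {0}) \<and>
     (\<forall>a b. d (a + b) = d a + d b) \<and>
     (\<forall>k. \<forall>a\<in>GC k. d a \<in> GC (k - 1)) \<and>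
     (\<forall>i j. \<forall>a\<in>GC i. \<forall>b\<in>GC j. a * b \<in> GC (i + j)) \<and>
     (\<forall>gs qs. gs \<noteq> [] \<longrightarrow> homog_list GC gs qs \<longrightarrow> ainf_alg_rel d gs qs = 0)"

text \<open>nu n : A (x) C^{(x) n-1} \<rightarrow> A is represented by the multilinear map
  nu n alpha [g_1,...,g_{n-1}].  Left-hand side of the N-th module relation
  evaluated on the homogeneous elementary tensor alpha (x) g_1 (x) ... (x) g_{N-1}
  (alpha of degree p, g_i of degree q_i), using the Koszul sign rule.\<close>
definition ainf_mod_rel ::
  "('c::ring \<Rightarrow> 'c) \<Rightarrow> (nat \<Rightarrow> 'a::ab_group_add \<Rightarrow> 'c list \<Rightarrow> 'a) \<Rightarrow> nat \<Rightarrow> int \<Rightarrow> 'a \<Rightarrow> 'c list \<Rightarrow> int list \<Rightarrow> 'a" where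
  "ainf_mod_rel d \<nu> N p \<alpha> gs qs =
     (\<Sum>s\<in>{1..N}. zmult (sgn1 (int s * int (N - s)))
                      (\<nu> (N - s + 1) (\<nu> s \<alpha> (take (s - 1) gs)) (drop (s - 1) gs)))
   + (\<Sum>r\<in>{1..N}. \<Sum>s\<in>{1..N - r}.
        zmult (sgn1 (int r + int s * int (N - r - s)) *
               sgn1 ((int s - 2) * (p + sum_list (take (r - 1) qs))))
              (\<nu> (N - s + 1) \<alpha>
                 (take (r - 1) gs @ [mu d (take s (drop (r - 1) gs))] @ drop (r - 1 + s) gs)))"

definition ainf_module ::
  "(int \<Rightarrow> 'c::ring set) \<Rightarrow> ('c \<Rightarrow> 'c) \<Rightarrow> (int \<Rightarrow> 'a::ab_group_add set) \<Rightarrow> (nat \<Rightarrow> 'a \<Rightarrow> 'c list \<Rightarrow> 'a) \<Rightarrow> bool" where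
  "ainf_module GC d GA \<nu> \<longleftrightarrow>
     graded_group GA \<and>
     (\<forall>n \<alpha> \<beta> gs. \<nu> n (\<alpha> + \<beta>) gs = \<nu> n \<alpha> gs + \<nu> n \<beta> gs) \<and>
     (\<forall>n \<alpha> us a b vs. \<nu> n \<alpha> (us @ (a + b) # vs) = \<nu> n \<alpha> (us @ a # vs) + \<nu> n \<alpha> (us @ b # vs)) \<and>
     (\<forall>n p \<alpha> gs qs. 1 \<le> n \<longrightarrow> length gs = n - 1 \<longrightarrow> \<alpha> \<in> GA p \<longrightarrow> homog_list GC gs qs \<longrightarrow>
        \<nu> n \<alpha> gs \<in> GA (p + sum_list qs + int n - 2)) \<and>
     (\<forall>N p \<alpha> gs qs. 1 \<le> N \<longrightarrow> length gs = N - 1 \<longrightarrow> \<alpha> \<in> GA p \<longrightarrow> homog_list GC gs qs \<longrightarrow>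
        ainf_mod_rel d \<nu> N p \<alpha> gs qs = 0)"

definition twisting_cocycle ::
  "(int \<Rightarrow> 'c::ring set) \<Rightarrow> ('c \<Rightarrow> 'c) \<Rightarrow> 'x set \<Rightarrow> ('x \<Rightarrow> nat) \<Rightarrow> ('x \<Rightarrow> 'x \<Rightarrow> 'c) \<Rightarrow> bool" where
  "twisting_cocycle GC d Crit ind m \<longleftrightarrow>
     (\<forall>x\<in>Crit. \<forall>y\<in>Crit. m x y \<in> GC (int (ind x) - int (ind y) - 1)) \<and>
     (\<forall>x\<in>Crit. \<forall>y\<in>Crit. d (m x y) =
        (\<Sum>z\<in>Crit. zmult (sgn1 (int (ind x) - int (ind z))) (m x z * m z y)))"

text \<open>Elementary homogeneous tensors c * (alpha (x) g_1 (x) ... (x) g_k (x) x) in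
  A (x) T C (x) Z Crit(f), stored as (c, |alpha|, alpha, [(g_1,|g_1|),...], x).
  One application of m-tilde to such a tensor is the sum over y in Crit of
  the following term (Koszul sign (-1)^{|m| (|alpha| + sum |g_i|)}, |m| = -1).\<close>
definition mt_step ::
  "('x \<Rightarrow> nat) \<Rightarrow> ('x \<Rightarrow> 'x \<Rightarrow> 'c) \<Rightarrow> int \<times> int \<times> 'a \<times> ('c \<times> int) list \<times> 'x \<Rightarrow> 'x
     \<Rightarrow> int \<times> int \<times> 'a \<times> ('c \<times> int) list \<times> 'x" where
  "mt_step ind m e y = (case e of (c, p, \<alpha>, gs, x) \<Rightarrow>
     (c * sgn1 (p + sum_list (map snd gs)), p, \<alpha>,
      gs @ [(m x y, int (ind x) - int (ind y) - 1)], y))"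

definition fsum :: "(nat \<Rightarrow> 'a::comm_monoid_add) \<Rightarrow> 'a" where
  "fsum f = sum f {n. f n \<noteq> 0}"

text \<open>The y-component of partial(alpha (x) x) = sum_{n>=0} (nu_{n+1} (x) 1) m-tilde^n (alpha (x) x),
  for alpha homogeneous of degree p; m-tilde^n (alpha (x) x) is the sum over all
  ys in Crit^n of the iterated step terms.\<close>
definition twisted_diff ::
  "'x set \<Rightarrow> ('x \<Rightarrow> nat) \<Rightarrow> ('x \<Rightarrow> 'x \<Rightarrow> 'c) \<Rightarrow> (nat \<Rightarrow> 'a::ab_group_add \<Rightarrow> 'c list \<Rightarrow> 'a)
     \<Rightarrow> int \<Rightarrow> 'a \<Rightarrow> 'x \<Rightarrow> 'x \<Rightarrow> 'a" where
  "twisted_diff Crit ind m \<nu> p \<alpha> x y =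
     fsum (\<lambda>n. \<Sum>ys\<in>{ys. set ys \<subseteq> Crit \<and> length ys = n}.
        (case foldl (mt_step ind m) (1, p, \<alpha>, [], x) ys of (c, _, a, gs, z) \<Rightarrow>
           if z = y then zmult c (\<nu> (n + 1) a (map fst gs)) else 0))"

end

theory Submission
  imports Defs
begin


definition sg :: "int \<Rightarrow> 'a::ab_group_add \<Rightarrow> 'a" where
  "sg k v = (if even k then v else - v)"

lemma sgn1_pm: "sgn1 k = 1 \<or> sgn1 k = -1" by (simp add: sgn1_def)

lemma zmult_sgn1: "zmult (sgn1 k) v = sg k v"
  by (simp add: zmult_def sgn1_def sg_def)

lemma sgn1_add: "sgn1 (a + b) = sgn1 a * sgn1 b"
  by (auto simp: sgn1_def)

lemma zmult_sgn1_mult: "zmult (sgn1 a * sgn1 b) v = sg (a + b) v"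
  by (simp add: zmult_sgn1 flip: sgn1_add)

lemma sg_add: "sg (a + b) v = sg a (sg b v)" by (auto simp: sg_def)
lemma sg_plus: "sg k (v + w) = sg k v + sg k w" by (auto simp: sg_def)
lemma sg_uminus: "sg k (- v) = - sg k v" by (auto simp: sg_def)
lemma sg_zero[simp]: "sg k 0 = 0" by (auto simp: sg_def)
lemma sg_even: "even (a - b) \<Longrightarrow> sg a v = sg b v"
  unfolding sg_def by (cases "even a"; cases "even b"; auto)
lemma sg_odd: "odd (a - b) \<Longrightarrow> sg a v = - sg b v"
  unfolding sg_def by (cases "even a"; cases "even b"; auto)
lemma sg_sum: "sg k (sum f S) = (\<Sum>i\<in>S. sg k (f i))"
  by (cases "even k") (simp_all add: sg_def sum_negf)

lemma hom_zero: "(\<And>a b. f (a + b) = f a + f b) \<Longrightarrow> f (0::'a::ab_group_add) = (0::'b::ab_group_add)"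
proof -
  assume h: "\<And>a b. f (a + b) = f a + f b"
  have "f (0 + 0) = f 0 + f 0" by (rule h)
  then have "f 0 = f 0 + f 0" by (simp only: add_0_left)
  then show ?thesis by (simp only: add_cancel_right_right)
qed
lemma hom_minus: "(\<And>a b. f (a + b) = (f (a::'a::ab_group_add) + f b::'b::ab_group_add)) \<Longrightarrow> f (- v) = - f v"
proof -
  assume h: "\<And>a b. f (a + b) = f a + f b"
  have "f (v + - v) = f v + f (- v)" by (rule h)
  then have "f v + f (- v) = 0" using hom_zero[of f, OF h] by simp
  then show ?thesis by (simp add: eq_neg_iff_add_eq_0 add.commute)
qed
lemma hom_sg: "(\<And>a b. f (a + b) = (f (a::'a::ab_group_add) + f b::'b::ab_group_add)) \<Longrightarrow> f (sg k v) = sg k (f v)"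
  by (simp add: sg_def hom_minus)
lemma hom_sum: "(\<And>a b. f (a + b) = (f (a::'a::ab_group_add) + f b::'b::ab_group_add)) \<Longrightarrow> f (sum g S) = (\<Sum>i\<in>S. f (g i))"
  using sum_comp_morphism[of f g S] hom_zero[of f] by (simp add: o_def)

lemma zmult_zero[simp]: "zmult c 0 = 0" by (simp add: zmult_def)



fun ml :: "('x \<Rightarrow> 'x \<Rightarrow> 'c) \<Rightarrow> 'x \<Rightarrow> 'x list \<Rightarrow> 'c list" where
  "ml m x [] = []" | "ml m x (y#ys) = m x y # ml m y ys"
fun ql :: "('x \<Rightarrow> nat) \<Rightarrow> 'x \<Rightarrow> 'x list \<Rightarrow> int list" where
  "ql ind x [] = []" | "ql ind x (y#ys) = (int (ind x) - int (ind y) - 1) # ql ind y ys"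
fun spe :: "('x \<Rightarrow> nat) \<Rightarrow> int \<Rightarrow> 'x \<Rightarrow> 'x list \<Rightarrow> int" where
  "spe ind t x [] = 0" | "spe ind t x (y#ys) = t + spe ind (t + int (ind x) - int (ind y) - 1) y ys"
fun dec :: "('x \<Rightarrow> nat) \<Rightarrow> 'x \<Rightarrow> 'x list \<Rightarrow> bool" where
  "dec ind x [] = True" | "dec ind x (y#ys) = (ind y < ind x \<and> dec ind y ys)"

lemma length_ml[simp]: "length (ml m x ys) = length ys"
  by (induction ys arbitrary: x) auto
lemma length_ql[simp]: "length (ql ind x ys) = length ys"
  by (induction ys arbitrary: x) auto
lemma last_append_path: "last (x # ys1 @ ys2) = last (last (x # ys1) # ys2)"
  by (induction ys1 arbitrary: x) auto
lemma ml_append: "ml m x (ys1 @ ys2) = ml m x ys1 @ ml m (last (x # ys1)) ys2"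
  by (induction ys1 arbitrary: x) auto
lemma ql_append: "ql ind x (ys1 @ ys2) = ql ind x ys1 @ ql ind (last (x # ys1)) ys2"
  by (induction ys1 arbitrary: x) auto
lemma dec_append: "dec ind x (ys1 @ ys2) = (dec ind x ys1 \<and> dec ind (last (x # ys1)) ys2)"
  by (induction ys1 arbitrary: x) auto
lemma sum_ql: "sum_list (ql ind x ys) = int (ind x) - int (ind (last (x # ys))) - int (length ys)"
  by (induction ys arbitrary: x) auto
lemma spe_shift: "spe ind t x ys = spe ind t' x ys + int (length ys) * (t - t')"
proof (induction ys arbitrary: x t t')
  case Nil then show ?case by simp
next
  case (Cons y ys)
  have "spe ind (t + int (ind x) - int (ind y) - 1) y ys = spe ind (t' + int (ind x) - int (ind y) - 1) y ys + int (length ys) * (t - t')"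
    using Cons.IH[where x=y and t="t + int (ind x) - int (ind y) - 1" and t'="t' + int (ind x) - int (ind y) - 1"] by (simp add: algebra_simps)
  then show ?case by (simp add: algebra_simps)
qed
lemma spe_append: "spe ind t x (ys1 @ ys2) = spe ind t x ys1 +
   spe ind (t + int (ind x) - int (ind (last (x # ys1))) - int (length ys1)) (last (x # ys1)) ys2"
  by (induction ys1 arbitrary: x t) (auto simp: algebra_simps)
lemma dec_length: "dec ind x ys \<Longrightarrow> length ys \<le> ind x"
  by (induction ys arbitrary: x) fastforce+
lemma last_in: "x \<in> C \<Longrightarrow> set ys \<subseteq> C \<Longrightarrow> last (x # ys) \<in> C"
  by (induction ys arbitrary: x) auto

lemma homog_list_Cons: "homog_list G (a # as) (q # qs) = (a \<in> G q \<and> homog_list G as qs)"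
  by (auto simp: homog_list_def nth_Cons split: nat.splits)
lemma homog_list_Nil: "homog_list G [] []" by (simp add: homog_list_def)

lemma foldl_mt: "foldl (mt_step ind m) (c, p, \<alpha>, gs, x) ys =
  (c * sgn1 (spe ind (p + sum_list (map snd gs)) x ys), p, \<alpha>, gs @ zip (ml m x ys) (ql ind x ys), last (x # ys))"
proof (induction ys arbitrary: c gs x)
  case Nil then show ?case by (simp add: sgn1_def)
next
  case (Cons y ys)
  let ?S = "sum_list (map snd gs)"
  let ?q = "int (ind x) - int (ind y) - 1"
  have "foldl (mt_step ind m) (c, p, \<alpha>, gs, x) (y # ys) =
     foldl (mt_step ind m) (c * sgn1 (p + ?S), p, \<alpha>, gs @ [(m x y, ?q)], y) ys"
    by (simp add: mt_step_def)
  also have "\<dots> = (c * sgn1 (p + ?S) * sgn1 (spe ind (p + sum_list (map snd (gs @ [(m x y, ?q)]))) y ys), p, \<alpha>,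
      (gs @ [(m x y, ?q)]) @ zip (ml m y ys) (ql ind y ys), last (y # ys))"
    by (rule Cons.IH)
  also have "p + sum_list (map snd (gs @ [(m x y, ?q)])) = p + ?S + int (ind x) - int (ind y) - 1"
    by simp
  finally show ?case
    by (simp add: sgn1_add mult.assoc)
qed

lemma ins_facts:
  assumes "k < length ys"
  obtains v rest where "drop k ys = v # rest"
proof
  show "drop k ys = ys ! k # drop (Suc k) ys" using assms by (rule Cons_nth_drop_Suc[symmetric])
qed

lemma ins_split:
  assumes "drop k ys = v # rest"
  shows "ys = take k ys @ v # rest"
  using assms by (metis append_take_drop_id)

lemma dec_ins:
  assumes "drop k ys = v # rest"
  shows "dec ind x (take k ys @ z # drop k ys) = (dec ind x ys \<and> ind v < ind z \<and> ind z < ind (last (x # take k ys)))"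
proof -
  have ys: "ys = take k ys @ v # rest" using assms by (rule ins_split)
  have "dec ind x ys = dec ind x (take k ys @ v # rest)" using ys by simp
  then show ?thesis using assms by (auto simp: dec_append simp del: append_take_drop_id)
qed

lemma last_ins:
  assumes "drop k ys = v # rest"
  shows "last (x # take k ys @ z # drop k ys) = last (x # ys)"
proof -
  have ys: "ys = take k ys @ v # rest" using assms by (rule ins_split)
  have "last (x # ys) = last (x # take k ys @ v # rest)" using ys by simp
  then show ?thesis using assms by (simp add: last_append_path del: append_take_drop_id)
qed

lemma ml_ins:
  assumes "drop k ys = v # rest"
  shows "ml m x (take k ys @ z # drop k ys) = ml m x (take k ys) @ m (last (x # take k ys)) z # m z v # ml m v rest"
    and "ml m x ys = ml m x (take k ys) @ m (last (x # take k ys)) v # ml m v rest"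
proof -
  have ys: "ys = take k ys @ v # rest" using assms by (rule ins_split)
  show "ml m x (take k ys @ z # drop k ys) = ml m x (take k ys) @ m (last (x # take k ys)) z # m z v # ml m v rest"
    using assms by (simp add: ml_append)
  have "ml m x ys = ml m x (take k ys @ v # rest)" using ys by simp
  then show "ml m x ys = ml m x (take k ys) @ m (last (x # take k ys)) v # ml m v rest"
    by (simp add: ml_append del: append_take_drop_id)
qed

lemma spe_ins:
  assumes "drop k ys = v # rest"
  shows "spe ind t x (take k ys @ z # drop k ys) = spe ind t x ys + t + int (ind x) - int (ind z) - int (length ys)"
proof -
  have ys: "ys = take k ys @ v # rest" using assms by (rule ins_split)
  have lk: "length (take k ys) = k" and lys: "length ys = k + 1 + length rest"
    using arg_cong[OF ys, of length] by simp_all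
  have mk: "min (length ys) k = k" using lys by simp
  define u where "u = last (x # take k ys)"
  define t2 where "t2 = t + int (ind x) - int (ind u) - int k"
  have A: "spe ind t x (take k ys @ z # drop k ys) = spe ind t x (take k ys) + spe ind t2 u (z # v # rest)"
    using assms by (simp add: spe_append mk u_def t2_def)
  have "spe ind t x ys = spe ind t x (take k ys @ v # rest)" using ys by simp
  also have "\<dots> = spe ind t x (take k ys) + spe ind t2 u (v # rest)"
    by (simp add: spe_append mk u_def t2_def del: append_take_drop_id)
  finally have B: "spe ind t x ys = spe ind t x (take k ys) + spe ind t2 u (v # rest)" .
  have C: "spe ind (t2 + int (ind u) - int (ind z) - 1 + int (ind z) - int (ind v) - 1) v rest =
     spe ind (t2 + int (ind u) - int (ind v) - 1) v rest - int (length rest)"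
    using spe_shift[of ind "t2 + int (ind u) - int (ind z) - 1 + int (ind z) - int (ind v) - 1" v rest "t2 + int (ind u) - int (ind v) - 1"]
    by simp
  show ?thesis
  proof -
    show ?thesis using A B C lys by (simp add: t2_def algebra_simps mk)
  qed
qed

definition Gp :: "'x set \<Rightarrow> ('x \<Rightarrow> nat) \<Rightarrow> 'x \<Rightarrow> 'x \<Rightarrow> 'x list set" where
  "Gp C ind x y = {ys. set ys \<subseteq> C \<and> dec ind x ys \<and> last (x # ys) = y}"

lemma finite_Gp: "finite C \<Longrightarrow> finite (Gp C ind x y)"
proof -
  assume f: "finite C"
  have "Gp C ind x y \<subseteq> {ys. set ys \<subseteq> C \<and> length ys \<le> ind x}"
    by (auto simp: Gp_def dec_length)
  moreover have "finite {ys. set ys \<subseteq> C \<and> length ys \<le> ind x}"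
    using f by (rule finite_lists_length_le)
  ultimately show ?thesis by (rule finite_subset)
qed



lemma mod_add_a: "ainf_module GC d GA \<nu> \<Longrightarrow> \<nu> n (a + b) gs = \<nu> n a gs + \<nu> n b gs"
  by (simp add: ainf_module_def)
lemma mod_add_l: "ainf_module GC d GA \<nu> \<Longrightarrow> \<nu> n \<alpha> (us @ (a + b) # vs) = \<nu> n \<alpha> (us @ a # vs) + \<nu> n \<alpha> (us @ b # vs)"
  by (simp add: ainf_module_def)

lemma nu_zero_l:
  assumes M: "ainf_module GC d GA \<nu>" shows "\<nu> n \<alpha> (us @ 0 # vs) = 0"
proof -
  have "\<And>a b. (\<lambda>c. \<nu> n \<alpha> (us @ c # vs)) (a + b) = (\<lambda>c. \<nu> n \<alpha> (us @ c # vs)) a + (\<lambda>c. \<nu> n \<alpha> (us @ c # vs)) b"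
    using mod_add_l[OF M] by simp
  from hom_zero[OF this] show ?thesis by simp
qed

lemma nu_zero_in:
  assumes M: "ainf_module GC d GA \<nu>" and "0 \<in> set gs" shows "\<nu> n \<alpha> gs = 0"
proof -
  obtain us vs where "gs = us @ 0 # vs" using assms(2) by (meson split_list)
  then show ?thesis using nu_zero_l[OF M] by simp
qed

lemma nu_sg_a: assumes M: "ainf_module GC d GA \<nu>" shows "\<nu> n (sg k a) gs = sg k (\<nu> n a gs)"
proof -
  have "\<And>a b. (\<lambda>c. \<nu> n c gs) (a + b) = (\<lambda>c. \<nu> n c gs) a + (\<lambda>c. \<nu> n c gs) b"
    using mod_add_a[OF M] by simp
  from hom_sg[OF this] show ?thesis by simp
qed
lemma nu_sum_a: assumes M: "ainf_module GC d GA \<nu>" shows "\<nu> n (sum f S) gs = (\<Sum>i\<in>S. \<nu> n (f i) gs)"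
proof -
  have "\<And>a b. (\<lambda>c. \<nu> n c gs) (a + b) = (\<lambda>c. \<nu> n c gs) a + (\<lambda>c. \<nu> n c gs) b"
    using mod_add_a[OF M] by simp
  from hom_sum[OF this] show ?thesis by simp
qed
lemma nu_sg_l: assumes M: "ainf_module GC d GA \<nu>" shows "\<nu> n \<alpha> (us @ sg k a # vs) = sg k (\<nu> n \<alpha> (us @ a # vs))"
proof -
  have "\<And>a b. (\<lambda>c. \<nu> n \<alpha> (us @ c # vs)) (a + b) = (\<lambda>c. \<nu> n \<alpha> (us @ c # vs)) a + (\<lambda>c. \<nu> n \<alpha> (us @ c # vs)) b"
    using mod_add_l[OF M] by simp
  from hom_sg[OF this] show ?thesis by simp
qed
lemma nu_sum_l: assumes M: "ainf_module GC d GA \<nu>" shows "\<nu> n \<alpha> (us @ sum f S # vs) = (\<Sum>i\<in>S. \<nu> n \<alpha> (us @ f i # vs))"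
proof -
  have "\<And>a b. (\<lambda>c. \<nu> n \<alpha> (us @ c # vs)) (a + b) = (\<lambda>c. \<nu> n \<alpha> (us @ c # vs)) a + (\<lambda>c. \<nu> n \<alpha> (us @ c # vs)) b"
    using mod_add_l[OF M] by simp
  from hom_sum[OF this] show ?thesis by simp
qed

lemma m_zero:
  assumes neg: "\<forall>k<0. GC k = {0}"
    and mem: "\<forall>x\<in>C. \<forall>y\<in>C. m x y \<in> GC (int (ind x) - int (ind y) - 1)"
    and "x \<in> C" "y \<in> C" "\<not> ind y < ind x"
  shows "m x y = 0"
proof -
  have "m x y \<in> GC (int (ind x) - int (ind y) - 1)" using mem assms(3,4) by blast
  moreover have "int (ind x) - int (ind y) - 1 < 0" using assms(5) by simp
  ultimately show ?thesis using neg by blast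
qed

lemma ml_zero:
  assumes neg: "\<forall>k<0. GC k = {0}"
    and mem: "\<forall>x\<in>C. \<forall>y\<in>C. m x y \<in> GC (int (ind x) - int (ind y) - 1)"
  shows "x \<in> C \<Longrightarrow> set ys \<subseteq> C \<Longrightarrow> \<not> dec ind x ys \<Longrightarrow> 0 \<in> set (ml m x ys)"
proof (induction ys arbitrary: x)
  case Nil then show ?case by simp
next
  case (Cons y ys)
  show ?case
  proof (cases "ind y < ind x")
    case True
    then have "\<not> dec ind y ys" using Cons.prems by simp
    then have "0 \<in> set (ml m y ys)" using Cons.IH Cons.prems by simp
    then show ?thesis by simp
  next
    case False
    then have "m x y = 0" using m_zero[OF neg mem] Cons.prems by simp
    then show ?thesis by simp
  qed
qed

lemma td_repr:
  assumes M: "ainf_module GC d GA \<nu>"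
    and neg: "\<forall>k<0. GC k = {0}"
    and mem: "\<forall>x\<in>C. \<forall>y\<in>C. m x y \<in> GC (int (ind x) - int (ind y) - 1)"
    and fin: "finite C" and x: "x \<in> C"
  shows "twisted_diff C ind m \<nu> p \<alpha> x y =
    (\<Sum>ys\<in>Gp C ind x y. sg (spe ind p x ys) (\<nu> (length ys + 1) \<alpha> (ml m x ys)))"
proof -
  define T where "T ys = sg (spe ind p x ys) (\<nu> (length ys + 1) \<alpha> (ml m x ys))" for ys
  define F where "F n = (\<Sum>ys\<in>{ys \<in> Gp C ind x y. length ys = n}. T ys)" for n
  have step1: "(\<Sum>ys\<in>{ys. set ys \<subseteq> C \<and> length ys = n}.
        (case foldl (mt_step ind m) (1, p, \<alpha>, [], x) ys of (c, _, a, gs, z) \<Rightarrow>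
           if z = y then zmult c (\<nu> (n + 1) a (map fst gs)) else 0)) = F n" for n
  proof -
    have "(\<Sum>ys\<in>{ys. set ys \<subseteq> C \<and> length ys = n}.
        (case foldl (mt_step ind m) (1, p, \<alpha>, [], x) ys of (c, _, a, gs, z) \<Rightarrow>
           if z = y then zmult c (\<nu> (n + 1) a (map fst gs)) else 0))
      = (\<Sum>ys\<in>{ys. set ys \<subseteq> C \<and> length ys = n}. if ys \<in> Gp C ind x y then T ys else 0)"
    proof (rule sum.cong[OF refl])
      fix ys assume ys: "ys \<in> {ys. set ys \<subseteq> C \<and> length ys = n}"
      have mf: "map fst (zip (ml m x ys) (ql ind x ys)) = ml m x ys" by simp
      have z: "\<not> dec ind x ys \<Longrightarrow> \<nu> (n + 1) \<alpha> (ml m x ys) = 0"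
        using ml_zero[OF neg mem x] ys nu_zero_in[OF M] by blast
      show "(case foldl (mt_step ind m) (1, p, \<alpha>, [], x) ys of (c, _, a, gs, z) \<Rightarrow>
           if z = y then zmult c (\<nu> (n + 1) a (map fst gs)) else 0) = (if ys \<in> Gp C ind x y then T ys else 0)"
        using ys z by (auto simp: foldl_mt mf zmult_sgn1 T_def Gp_def)
    qed
    also have "\<dots> = sum T {ys \<in> {ys. set ys \<subseteq> C \<and> length ys = n}. ys \<in> Gp C ind x y}"
      by (rule sum.inter_filter[symmetric]) (simp add: finite_lists_length_eq fin)
    also have "{ys \<in> {ys. set ys \<subseteq> C \<and> length ys = n}. ys \<in> Gp C ind x y} = {ys \<in> Gp C ind x y. length ys = n}"
      by (auto simp: Gp_def)
    finally show ?thesis by (simp add: F_def)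
  qed
  have "twisted_diff C ind m \<nu> p \<alpha> x y = fsum F"
    unfolding twisted_diff_def using step1 by simp
  also have "\<dots> = sum F {..ind x}"
    unfolding fsum_def
  proof (rule sum.mono_neutral_left)
    show "finite {..ind x}" by simp
    show "{n. F n \<noteq> 0} \<subseteq> {..ind x}"
    proof
      fix n assume "n \<in> {n. F n \<noteq> 0}"
      then have "{ys \<in> Gp C ind x y. length ys = n} \<noteq> {}"
        by (cases "{ys \<in> Gp C ind x y. length ys = n} = {}") (auto simp: F_def)
      then show "n \<in> {..ind x}" by (auto simp: Gp_def dest: dec_length)
    qed
    show "\<forall>i\<in>{..ind x} - {n. F n \<noteq> 0}. F i = 0" by simp
  qed
  also have "\<dots> = sum T (Gp C ind x y)"
    unfolding F_def
  proof (rule sum.group)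
    show "finite (Gp C ind x y)" using fin by (rule finite_Gp)
  qed (auto simp: Gp_def dest: dec_length)
  finally show ?thesis by (simp add: T_def)
qed



lemma gg_sum: assumes G: "graded_group G" shows "(\<forall>i\<in>S. f i \<in> G k) \<Longrightarrow> sum f S \<in> G k"
proof (induction S rule: infinite_finite_induct)
  case (infinite A) then show ?case using G by (simp add: graded_group_def)
next
  case empty then show ?case using G by (simp add: graded_group_def)
next
  case (insert a A) then show ?case using G by (simp add: graded_group_def)
qed

lemma gg_sg: assumes G: "graded_group G" shows "v \<in> G k \<Longrightarrow> sg j v \<in> G k"
  using G by (simp add: graded_group_def sg_def)

lemma homog_ml:
  assumes mem: "\<forall>x\<in>C. \<forall>y\<in>C. m x y \<in> GC (int (ind x) - int (ind y) - 1)"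
  shows "x \<in> C \<Longrightarrow> set ys \<subseteq> C \<Longrightarrow> homog_list GC (ml m x ys) (ql ind x ys)"
proof (induction ys arbitrary: x)
  case Nil then show ?case by (simp add: homog_list_Nil)
next
  case (Cons y ys) then show ?case using mem by (simp add: homog_list_Cons)
qed

lemma part1:
  assumes M: "ainf_module GC d GA \<nu>"
    and neg: "\<forall>k<0. GC k = {0}"
    and mem: "\<forall>x\<in>C. \<forall>y\<in>C. m x y \<in> GC (int (ind x) - int (ind y) - 1)"
    and fin: "finite C" and x: "x \<in> C"
  shows "twisted_diff C ind m \<nu> p (\<alpha> + \<beta>) x y = twisted_diff C ind m \<nu> p \<alpha> x y + twisted_diff C ind m \<nu> p \<beta> x y"
  by (simp add: td_repr[OF M neg mem fin x] mod_add_a[OF M] sg_plus sum.distrib)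

lemma part2:
  assumes M: "ainf_module GC d GA \<nu>"
    and neg: "\<forall>k<0. GC k = {0}"
    and mem: "\<forall>x\<in>C. \<forall>y\<in>C. m x y \<in> GC (int (ind x) - int (ind y) - 1)"
    and fin: "finite C" and x: "x \<in> C" and a: "\<alpha> \<in> GA p"
  shows "twisted_diff C ind m \<nu> p \<alpha> x y \<in> GA (p + int (ind x) - 1 - int (ind y))"
proof -
  have G: "graded_group GA" using M by (simp add: ainf_module_def)
  have deg: "\<And>n p \<alpha> gs qs. 1 \<le> n \<Longrightarrow> length gs = n - 1 \<Longrightarrow> \<alpha> \<in> GA p \<Longrightarrow> homog_list GC gs qs \<Longrightarrow>
        \<nu> n \<alpha> gs \<in> GA (p + sum_list qs + int n - 2)"
    using M by (simp add: ainf_module_def)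
  show ?thesis
    unfolding td_repr[OF M neg mem fin x]
  proof (rule gg_sum[OF G], intro ballI, rule gg_sg[OF G])
    fix ys assume ys: "ys \<in> Gp C ind x y"
    have h: "homog_list GC (ml m x ys) (ql ind x ys)"
      using homog_ml[OF mem x] ys by (simp add: Gp_def)
    have "\<nu> (length ys + 1) \<alpha> (ml m x ys) \<in> GA (p + sum_list (ql ind x ys) + int (length ys + 1) - 2)"
      by (rule deg[OF _ _ a h]) simp_all
    moreover have "p + sum_list (ql ind x ys) + int (length ys + 1) - 2 = p + int (ind x) - 1 - int (ind y)"
      using ys by (simp add: sum_ql Gp_def)
    ultimately show "\<nu> (length ys + 1) \<alpha> (ml m x ys) \<in> GA (p + int (ind x) - 1 - int (ind y))"
      by (simp only:)
  qed
qed



lemma stepA: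
  assumes M: "ainf_module GC d GA \<nu>"
    and neg: "\<forall>k<0. GC k = {0}"
    and mem: "\<forall>x\<in>C. \<forall>y\<in>C. m x y \<in> GC (int (ind x) - int (ind y) - 1)"
    and fin: "finite C" and x: "x \<in> C"
  shows "(\<Sum>z\<in>C. twisted_diff C ind m \<nu> (p + int (ind x) - 1 - int (ind z))
                          (twisted_diff C ind m \<nu> p \<alpha> x z) z y)
   = (\<Sum>ys\<in>Gp C ind x y. sg (spe ind p x ys)
        (\<Sum>s\<in>{1..length ys + 1}. zmult (sgn1 (int s * int (length ys + 1 - s)))
           (\<nu> (length ys + 1 - s + 1) (\<nu> s \<alpha> (take (s - 1) (ml m x ys))) (drop (s - 1) (ml m x ys)))))"
proof -
  define F where "F z ys1 ys2 = sg (spe ind (p + int (ind x) - 1 - int (ind z)) z ys2 + spe ind p x ys1)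
     (\<nu> (length ys2 + 1) (\<nu> (length ys1 + 1) \<alpha> (ml m x ys1)) (ml m z ys2))" for z ys1 ys2
  define H where "H ys a = sg (spe ind p x ys) (zmult (sgn1 (int (Suc a) * int (length ys + 1 - Suc a)))
           (\<nu> (length ys + 1 - Suc a + 1) (\<nu> (Suc a) \<alpha> (take (Suc a - 1) (ml m x ys))) (drop (Suc a - 1) (ml m x ys))))" for ys a
  have inner: "twisted_diff C ind m \<nu> (p + int (ind x) - 1 - int (ind z)) (twisted_diff C ind m \<nu> p \<alpha> x z) z y
     = (\<Sum>ys2\<in>Gp C ind z y. \<Sum>ys1\<in>Gp C ind x z. F z ys1 ys2)" if z: "z \<in> C" for z
    by (simp add: td_repr[OF M neg mem fin x] td_repr[OF M neg mem fin z] nu_sum_a[OF M] nu_sg_a[OF M]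
        sg_sum sg_add F_def)
  have "(\<Sum>z\<in>C. twisted_diff C ind m \<nu> (p + int (ind x) - 1 - int (ind z))
                          (twisted_diff C ind m \<nu> p \<alpha> x z) z y)
      = (\<Sum>z\<in>C. \<Sum>ys2\<in>Gp C ind z y. \<Sum>ys1\<in>Gp C ind x z. F z ys1 ys2)"
    using inner by simp
  also have "\<dots> = (\<Sum>z\<in>C. \<Sum>ys1\<in>Gp C ind x z. \<Sum>ys2\<in>Gp C ind z y. F z ys1 ys2)"
    by (simp add: sum.swap[of _ "Gp C ind x _"])
  also have "\<dots> = (\<Sum>z\<in>C. \<Sum>(ys1, ys2)\<in>Gp C ind x z \<times> Gp C ind z y. F z ys1 ys2)"
    by (simp add: sum.cartesian_product)
  also have "\<dots> = (\<Sum>(z, w)\<in>(SIGMA z:C. Gp C ind x z \<times> Gp C ind z y). case w of (ys1, ys2) \<Rightarrow> F z ys1 ys2)"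
    by (rule sum.Sigma) (auto simp: fin finite_Gp)
  also have "\<dots> = (\<Sum>(ys, a)\<in>(SIGMA ys:Gp C ind x y. {0..length ys}). H ys a)"
  proof (rule sum.reindex_bij_witness[where i = "\<lambda>(ys, a). (last (x # take a ys), (take a ys, drop a ys))"
        and j = "\<lambda>(z, (ys1, ys2)). (ys1 @ ys2, length ys1)"])
    fix w assume w: "w \<in> (SIGMA z:C. Gp C ind x z \<times> Gp C ind z y)"
    then obtain z ys1 ys2 where w': "w = (z, (ys1, ys2))" and z: "z \<in> C" and y1: "ys1 \<in> Gp C ind x z" and y2: "ys2 \<in> Gp C ind z y"
      by auto
    have lz: "last (x # ys1) = z" using y1 by (simp add: Gp_def)
    show "(case case w of (z, ys1, ys2) \<Rightarrow> (ys1 @ ys2, length ys1) of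
          (ys, a) \<Rightarrow> (last (x # take a ys), take a ys, drop a ys)) = w"
      using w' lz by (auto split: if_splits)
    show "(case w of (z, ys1, ys2) \<Rightarrow> (ys1 @ ys2, length ys1)) \<in> (SIGMA ys:Gp C ind x y. {0..length ys})"
      using w' y1 y2 by (auto simp: Gp_def dec_append last_append_path)
    let ?a = "length ys1" and ?b = "length ys2"
    define p' where "p' = p + int (ind x) - 1 - int (ind z)"
    have s1: "spe ind p x (ys1 @ ys2) = spe ind p x ys1 + spe ind (p + int (ind x) - int (ind z) - int ?a) z ys2"
      using lz by (simp add: spe_append)
    have s2: "spe ind (p + int (ind x) - int (ind z) - int ?a) z ys2 = spe ind p' z ys2 + int ?b * ((p + int (ind x) - int (ind z) - int ?a) - p')"
      by (rule spe_shift)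
    have ev: "even ((spe ind p x (ys1 @ ys2) + int (Suc ?a) * int ?b) - (spe ind p' z ys2 + spe ind p x ys1))"
    proof -
      have "(spe ind p x (ys1 @ ys2) + int (Suc ?a) * int ?b) - (spe ind p' z ys2 + spe ind p x ys1) = 2 * int ?b"
        using s1 s2 by (simp add: p'_def algebra_simps)
      then show ?thesis by simp
    qed
    have ml1: "take ?a (ml m x (ys1 @ ys2)) = ml m x ys1" and ml2: "drop ?a (ml m x (ys1 @ ys2)) = ml m z ys2"
      using lz by (simp_all add: ml_append)
    show "(case case w of (z, ys1, ys2) \<Rightarrow> (ys1 @ ys2, length ys1) of (ys, a) \<Rightarrow> H ys a) =
          (case w of (z, w) \<Rightarrow> case w of (ys1, ys2) \<Rightarrow> F z ys1 ys2)"
      using w' apply simp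
      unfolding H_def F_def ml1 ml2 zmult_sgn1 sg_add[symmetric] p'_def[symmetric]
      using sg_even[OF ev] by (simp add: ml1 ml2)
  next
    fix b assume b: "b \<in> (SIGMA ys:Gp C ind x y. {0..length ys})"
    then obtain ys a where b': "b = (ys, a)" and ys: "ys \<in> Gp C ind x y" and a: "a \<le> length ys" by auto
    show "(case case b of (ys, a) \<Rightarrow> (last (x # take a ys), take a ys, drop a ys) of
          (z, ys1, ys2) \<Rightarrow> (ys1 @ ys2, length ys1)) = b"
      using b' a by simp
    have ys': "ys = take a ys @ drop a ys" by simp
    have "set ys \<subseteq> C" "dec ind x ys" "last (x # ys) = y" using ys by (auto simp: Gp_def)
    note yy = this
    have "set (take a ys) \<subseteq> C" using set_take_subset[of a ys] yy(1) by (rule subset_trans)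
    moreover have "set (drop a ys) \<subseteq> C" using set_drop_subset[of a ys] yy(1) by (rule subset_trans)
    moreover have "dec ind x (take a ys @ drop a ys)" using yy(2) by simp
    then have "dec ind x (take a ys)" "dec ind (last (x # take a ys)) (drop a ys)"
      by (simp_all only: dec_append)
    moreover have "last (x # take a ys @ drop a ys) = last (last (x # take a ys) # drop a ys)"
      by (rule last_append_path)
    then have "last (last (x # take a ys) # drop a ys) = y" using yy(3) by simp
    moreover have "last (x # take a ys) \<in> C" using x \<open>set (take a ys) \<subseteq> C\<close> by (rule last_in)
    ultimately show "(case b of (ys, a) \<Rightarrow> (last (x # take a ys), take a ys, drop a ys))
         \<in> (SIGMA z:C. Gp C ind x z \<times> Gp C ind z y)"
      using b' by (simp add: Gp_def)
  qed
  also have "\<dots> = (\<Sum>ys\<in>Gp C ind x y. \<Sum>a\<in>{0..length ys}. H ys a)"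
    by (rule sum.Sigma[symmetric]) (auto simp: fin finite_Gp)
  also have "\<dots> = (\<Sum>ys\<in>Gp C ind x y. sg (spe ind p x ys)
        (\<Sum>s\<in>{1..length ys + 1}. zmult (sgn1 (int s * int (length ys + 1 - s)))
           (\<nu> (length ys + 1 - s + 1) (\<nu> s \<alpha> (take (s - 1) (ml m x ys))) (drop (s - 1) (ml m x ys)))))"
  proof (rule sum.cong[OF refl])
    fix ys assume "ys \<in> Gp C ind x y"
    have "{1..length ys + 1} = {Suc 0..Suc (length ys)}" by simp
    then show "(\<Sum>a\<in>{0..length ys}. H ys a) = sg (spe ind p x ys)
        (\<Sum>s\<in>{1..length ys + 1}. zmult (sgn1 (int s * int (length ys + 1 - s)))
           (\<nu> (length ys + 1 - s + 1) (\<nu> s \<alpha> (take (s - 1) (ml m x ys))) (drop (s - 1) (ml m x ys))))"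
      by (simp only: sum.shift_bounds_cl_Suc_ivl sg_sum H_def)
  qed
  finally show ?thesis .
qed



lemma mu_long: "3 \<le> length xs \<Longrightarrow> mu d xs = 0"
proof (cases xs)
  case (Cons a l1)
  assume h: "3 \<le> length xs"
  show ?thesis
  proof (cases l1)
    case (Cons b l2)
    show ?thesis
    proof (cases l2)
      case Nil then show ?thesis using h \<open>xs = a # l1\<close> \<open>l1 = b # l2\<close> by simp
    next
      case (Cons c l3) then show ?thesis using \<open>xs = a # l1\<close> \<open>l1 = b # l2\<close> by simp
    qed
  qed (use h Cons in simp)
qed simp

lemma sum12:
  fixes f :: "nat \<Rightarrow> 'a::comm_monoid_add" and n :: nat
  assumes "\<And>s. 3 \<le> s \<Longrightarrow> s \<le> n \<Longrightarrow> f s = 0"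
  shows "(\<Sum>s\<in>{1..n}. f s) = (if 1 \<le> n then f 1 else 0) + (if 2 \<le> n then f 2 else 0)"
  using assms
proof (induction n)
  case 0 then show ?case by simp
next
  case (Suc n)
  show ?case
  proof (cases "n \<le> 1")
    case True
    then consider "n = 0" | "n = 1" by linarith
    then show ?thesis
    proof cases
      case 1 then show ?thesis by simp
    next
      case 2 then show ?thesis by (simp add: numeral_2_eq_2)
    qed
  next
    case False
    then have "f (Suc n) = 0" using Suc.prems by simp
    moreover have "(\<Sum>s\<in>{1..n}. f s) = (if 1 \<le> n then f 1 else 0) + (if 2 \<le> n then f 2 else 0)"
      using Suc by simp
    ultimately show ?thesis using False by simp
  qed
qed

locale tw =
  fixes GC :: "int \<Rightarrow> 'c::ring set" and d :: "'c \<Rightarrow> 'c"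
    and C :: "'x set" and ind :: "'x \<Rightarrow> nat" and m :: "'x \<Rightarrow> 'x \<Rightarrow> 'c"
    and GA :: "int \<Rightarrow> 'a::ab_group_add set" and \<nu> :: "nat \<Rightarrow> 'a \<Rightarrow> 'c list \<Rightarrow> 'a"
    and p :: int and \<alpha> :: 'a and x :: 'x
  assumes M: "ainf_module GC d GA \<nu>"
    and neg: "\<forall>k<0. GC k = {0}"
    and mem: "\<forall>x\<in>C. \<forall>y\<in>C. m x y \<in> GC (int (ind x) - int (ind y) - 1)"
    and cyc: "\<forall>x\<in>C. \<forall>y\<in>C. d (m x y) = (\<Sum>z\<in>C. zmult (sgn1 (int (ind x) - int (ind z))) (m x z * m z y))"
    and fin: "finite C" and xC: "x \<in> C" and aG: "\<alpha> \<in> GA p"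
begin

definition t2 :: "'x list \<Rightarrow> nat \<Rightarrow> nat \<Rightarrow> 'a" where
  "t2 ys r s = zmult (sgn1 (int r + int s * int (length ys + 1 - r - s)) *
               sgn1 ((int s - 2) * (p + sum_list (take (r - 1) (ql ind x ys)))))
              (\<nu> (length ys + 1 - s + 1) \<alpha>
                 (take (r - 1) (ml m x ys) @ [mu d (take s (drop (r - 1) (ml m x ys)))] @ drop (r - 1 + s) (ml m x ys)))"

lemma modrel_split:
  "ainf_mod_rel d \<nu> (length ys + 1) p \<alpha> (ml m x ys) (ql ind x ys) =
     (\<Sum>s\<in>{1..length ys + 1}. zmult (sgn1 (int s * int (length ys + 1 - s)))
           (\<nu> (length ys + 1 - s + 1) (\<nu> s \<alpha> (take (s - 1) (ml m x ys))) (drop (s - 1) (ml m x ys))))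
   + (\<Sum>r\<in>{1..length ys + 1}. \<Sum>s\<in>{1..length ys + 1 - r}. t2 ys r s)"
  unfolding ainf_mod_rel_def t2_def by simp

lemma t2_big: "1 \<le> r \<Longrightarrow> r - 1 + s \<le> length ys \<Longrightarrow> 3 \<le> s \<Longrightarrow> t2 ys r s = 0"
proof -
  assume a: "1 \<le> r" "r - 1 + s \<le> length ys" "3 \<le> s"
  have "length (take s (drop (r - 1) (ml m x ys))) = s" using a by simp
  then have "mu d (take s (drop (r - 1) (ml m x ys))) = 0" using a by (intro mu_long) simp
  then show ?thesis unfolding t2_def using nu_zero_in[OF M] by simp
qed

lemma P2_split:
  "(\<Sum>r\<in>{1..length ys + 1}. \<Sum>s\<in>{1..length ys + 1 - r}. t2 ys r s) =
   (\<Sum>r\<in>{1..length ys}. t2 ys r 1) + (\<Sum>r\<in>{1..length ys - 1}. t2 ys r 2)"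
proof -
  have "(\<Sum>r\<in>{1..length ys + 1}. \<Sum>s\<in>{1..length ys + 1 - r}. t2 ys r s) =
     (\<Sum>r\<in>{1..length ys + 1}. (if 1 \<le> length ys + 1 - r then t2 ys r 1 else 0) + (if 2 \<le> length ys + 1 - r then t2 ys r 2 else 0))"
  proof (rule sum.cong[OF refl])
    fix r assume r: "r \<in> {1..length ys + 1}"
    show "(\<Sum>s\<in>{1..length ys + 1 - r}. t2 ys r s) = (if 1 \<le> length ys + 1 - r then t2 ys r 1 else 0) + (if 2 \<le> length ys + 1 - r then t2 ys r 2 else 0)"
      by (rule sum12) (use r in \<open>auto intro: t2_big\<close>)
  qed
  also have "\<dots> = (\<Sum>r\<in>{1..length ys + 1}. if 1 \<le> length ys + 1 - r then t2 ys r 1 else 0) + (\<Sum>r\<in>{1..length ys + 1}. if 2 \<le> length ys + 1 - r then t2 ys r 2 else 0)"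
    by (rule sum.distrib)
  also have "(\<Sum>r\<in>{1..length ys + 1}. if 1 \<le> length ys + 1 - r then t2 ys r 1 else 0) = sum (\<lambda>r. t2 ys r 1) {r\<in>{1..length ys + 1}. 1 \<le> length ys + 1 - r}"
    by (rule sum.inter_filter[symmetric]) simp
  also have "{r\<in>{1..length ys + 1}. 1 \<le> length ys + 1 - r} = {1..length ys}" by auto
  also have "(\<Sum>r\<in>{1..length ys + 1}. if 2 \<le> length ys + 1 - r then t2 ys r 2 else 0) = sum (\<lambda>r. t2 ys r 2) {r\<in>{1..length ys + 1}. 2 \<le> length ys + 1 - r}"
    by (rule sum.inter_filter[symmetric]) simp
  also have "{r\<in>{1..length ys + 1}. 2 \<le> length ys + 1 - r} = {1..length ys - 1}" by auto
  finally show ?thesis .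
qed

end


context tw begin

definition ul :: "'x list \<Rightarrow> nat \<Rightarrow> 'x" where
  "ul ys r = last (x # take (r - 1) ys)"

definition Dt :: "'x list \<Rightarrow> nat \<Rightarrow> 'x \<Rightarrow> 'a" where
  "Dt ys r z = sg (spe ind p x ys + int r + int (length ys - r)
       - (p + (int (ind x) - int (ind (ul ys r)) - int (r - 1))) + int (ind (ul ys r)) - int (ind z))
     (\<nu> (length ys + 1) \<alpha> (take (r - 1) (ml m x ys) @ (m (ul ys r) z * m z (ys ! (r - 1))) # drop r (ml m x ys)))"

definition Pt :: "'x list \<Rightarrow> nat \<Rightarrow> 'a" where
  "Pt ys r = sg (spe ind p x ys + int r)
     (\<nu> (length ys) \<alpha> (take (r - 1) (ml m x ys) @ (ml m x ys ! (r - 1) * ml m x ys ! r) # drop (r + 1) (ml m x ys)))"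

lemma t2_1:
  assumes ys: "set ys \<subseteq> C" and r: "1 \<le> r" "r \<le> length ys"
  shows "sg (spe ind p x ys) (t2 ys r 1) = (\<Sum>z\<in>C. Dt ys r z)"
proof -
  define k where "k = r - 1"
  have kl: "k < length ys" and rk: "r = k + 1" using r by (auto simp: k_def)
  obtain v rest where dr: "drop k ys = v # rest" using kl by (rule ins_facts)
  define u where "u = last (x # take k ys)"
  have uu: "ul ys r = u" by (simp add: ul_def u_def k_def)
  have gs: "ml m x ys = ml m x (take k ys) @ m u v # ml m v rest"
    unfolding u_def by (rule ml_ins(2)[OF dr])
  have lk: "length (ml m x (take k ys)) = k" using kl by simp
  have tk: "take k (ml m x ys) = ml m x (take k ys)" using gs lk by simp
  have dk: "drop k (ml m x ys) = m u v # ml m v rest" using gs lk by simp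
  have "drop (k + 1) (ml m x ys) = drop 1 (drop k (ml m x ys))" by (simp add: drop_drop)
  also have "\<dots> = ml m v rest" using dk by simp
  finally have dk1: "drop (k + 1) (ml m x ys) = ml m v rest" .
  have vn: "ys ! k = v" using dr by (rule nth_via_drop)
  have uC: "u \<in> C" unfolding u_def using xC set_take_subset[of k ys] ys by (intro last_in) auto
  have "v \<in> set (drop k ys)" using dr by simp
  then have "v \<in> set ys" by (rule in_set_dropD)
  then have vC: "v \<in> C" using ys by blast
  have qs: "sum_list (take k (ql ind x ys)) = int (ind x) - int (ind u) - int k"
  proof -
    have "ql ind x ys = ql ind x (take k ys @ drop k ys)" by simp
    also have "\<dots> = ql ind x (take k ys) @ ql ind (last (x # take k ys)) (drop k ys)" by (rule ql_append)
    finally have "take k (ql ind x ys) = ql ind x (take k ys)" using kl by simp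
    then show ?thesis using kl by (simp add: sum_ql u_def)
  qed
  have dm: "d (m u v) = (\<Sum>z\<in>C. sg (int (ind u) - int (ind z)) (m u z * m z v))"
    using cyc uC vC by (simp add: zmult_sgn1)
  have "t2 ys r 1 = sg (int r + int (length ys + 1 - r - 1) + (- 1) * (p + (int (ind x) - int (ind u) - int k)))
      (\<nu> (length ys + 1) \<alpha> (ml m x (take k ys) @ d (m u v) # ml m v rest))"
  proof -
    have rm: "r - 1 = k" by (simp add: k_def)
    have "t2 ys r 1 = zmult (sgn1 (int r + int 1 * int (length ys + 1 - r - 1)) * sgn1 ((int 1 - 2) * (p + sum_list (take k (ql ind x ys)))))
       (\<nu> (length ys + 1 - 1 + 1) \<alpha> (ml m x (take k ys) @ [mu d (take 1 (m u v # ml m v rest))] @ ml m v rest))"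
      unfolding t2_def rm tk dk dk1 ..
    also have "\<dots> = sg (int r + int (length ys + 1 - r - 1) + (- 1) * (p + (int (ind x) - int (ind u) - int k)))
      (\<nu> (length ys + 1) \<alpha> (ml m x (take k ys) @ d (m u v) # ml m v rest))"
      unfolding qs zmult_sgn1_mult by simp
    finally show ?thesis .
  qed
  also have "\<dots> = (\<Sum>z\<in>C. sg (int r + int (length ys + 1 - r - 1) + (- 1) * (p + (int (ind x) - int (ind u) - int k)))
      (sg (int (ind u) - int (ind z)) (\<nu> (length ys + 1) \<alpha> (ml m x (take k ys) @ (m u z * m z v) # ml m v rest))))"
    unfolding dm nu_sum_l[OF M] nu_sg_l[OF M] sg_sum ..
  finally have "sg (spe ind p x ys) (t2 ys r 1) = (\<Sum>z\<in>C. sg (spe ind p x ys) (sg (int r + int (length ys + 1 - r - 1) + (- 1) * (p + (int (ind x) - int (ind u) - int k)))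
      (sg (int (ind u) - int (ind z)) (\<nu> (length ys + 1) \<alpha> (ml m x (take k ys) @ (m u z * m z v) # ml m v rest)))))"
    by (simp add: sg_sum)
  also have "\<dots> = (\<Sum>z\<in>C. Dt ys r z)"
  proof (rule sum.cong[OF refl])
    fix z assume "z \<in> C"
    have rm: "r - 1 = k" by (simp add: k_def)
    have dr1: "drop r (ml m x ys) = ml m v rest" using dk1 rk by simp
    have e: "spe ind p x ys + (int r + int (length ys + 1 - r - 1) + (- 1) * (p + (int (ind x) - int (ind u) - int k)) + (int (ind u) - int (ind z)))
       = spe ind p x ys + int r + int (length ys - r)
       - (p + (int (ind x) - int (ind u) - int (r - 1))) + int (ind u) - int (ind z)"
      using rk by simp
    show "sg (spe ind p x ys) (sg (int r + int (length ys + 1 - r - 1) + (- 1) * (p + (int (ind x) - int (ind u) - int k)))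
      (sg (int (ind u) - int (ind z)) (\<nu> (length ys + 1) \<alpha> (ml m x (take k ys) @ (m u z * m z v) # ml m v rest)))) = Dt ys r z"
      unfolding Dt_def uu sg_add[symmetric] e rm tk vn dr1 ..
  qed
  finally show ?thesis .
qed

lemma t2_2:
  assumes r: "1 \<le> r" "r < length ys"
  shows "sg (spe ind p x ys) (t2 ys r 2) = Pt ys r"
proof -
  define gs where "gs = ml m x ys"
  have lg: "length gs = length ys" by (simp add: gs_def)
  have d1: "drop (r - 1) gs = gs ! (r - 1) # gs ! r # drop (r + 1) gs"
  proof -
    have a: "drop (r - 1) gs = gs ! (r - 1) # drop (Suc (r - 1)) gs" using r lg by (intro Cons_nth_drop_Suc[symmetric]) simp
    have b: "drop r gs = gs ! r # drop (Suc r) gs" using r lg by (intro Cons_nth_drop_Suc[symmetric]) simp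
    have c: "Suc (r - 1) = r" using r by simp
    show ?thesis using a b c by simp
  qed
  have m2: "mu d (take 2 (drop (r - 1) gs)) = gs ! (r - 1) * gs ! r"
    unfolding d1 by (simp add: numeral_2_eq_2)
  have dd: "drop (r - 1 + 2) gs = drop (r + 1) gs" using r by (simp add: numeral_2_eq_2)
  have ee: "even ((spe ind p x ys + (int r + int 2 * int (length ys + 1 - r - 2) + (int 2 - 2) * (p + sum_list (take (r - 1) (ql ind x ys))))) - (spe ind p x ys + int r))"
    by simp
  have nn: "length ys + 1 - 2 + 1 = length ys" using r by simp
  show ?thesis
    unfolding t2_def Pt_def gs_def[symmetric] m2 dd zmult_sgn1_mult sg_add[symmetric] nn
    using sg_even[OF ee] by simp
qed

end


lemma ins_ml_facts:
  fixes k :: nat and ys :: "'x list" and z x :: 'x and m :: "'x \<Rightarrow> 'x \<Rightarrow> 'c"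
  assumes dr: "drop k ys = v # rest"
  defines "ys' \<equiv> take k ys @ z # drop k ys"
  defines "u \<equiv> last (x # take k ys)"
  shows "take k (ml m x ys) = ml m x (take k ys)"
    and "drop (k + 1) (ml m x ys) = ml m v rest"
    and "ys ! k = v"
    and "take k (ml m x ys') = ml m x (take k ys)"
    and "ml m x ys' ! k = m u z"
    and "ml m x ys' ! (k + 1) = m z v"
    and "drop (k + 2) (ml m x ys') = ml m v rest"
    and "take k ys' = take k ys"
    and "length ys' = length ys + 1"
    and "k < length ys"
proof -
  have kl: "k < length ys" using dr by (metis drop_eq_Nil2 list.distinct(1) not_le_imp_less)
  then show "k < length ys" .
  have lk: "length (take k ys) = k" using kl by simp
  have lmk: "length (ml m x (take k ys)) = k" using kl by simp
  have g: "ml m x ys = ml m x (take k ys) @ m u v # ml m v rest"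
    unfolding u_def by (rule ml_ins(2)[OF dr])
  have g': "ml m x ys' = ml m x (take k ys) @ m u z # m z v # ml m v rest"
    unfolding u_def ys'_def by (rule ml_ins(1)[OF dr])
  show "take k (ml m x ys) = ml m x (take k ys)" unfolding g using lmk by simp
  show "drop (k + 1) (ml m x ys) = ml m v rest" unfolding g using lmk by simp
  show "ys ! k = v" using dr by (rule nth_via_drop)
  show "take k (ml m x ys') = ml m x (take k ys)" unfolding g' using lmk by simp
  show "ml m x ys' ! k = m u z" unfolding g' using lmk by (simp add: nth_append)
  show "ml m x ys' ! (k + 1) = m z v" unfolding g' using lmk by (simp add: nth_append)
  show "drop (k + 2) (ml m x ys') = ml m v rest" unfolding g' using lmk by simp
  show "take k ys' = take k ys" unfolding ys'_def using lk by simp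
  show "length ys' = length ys + 1" unfolding ys'_def using kl by simp
qed

context tw begin

lemma cancel:
  "(\<Sum>ys\<in>Gp C ind x y. \<Sum>r\<in>{1..length ys}. \<Sum>z\<in>C. Dt ys r z)
   + (\<Sum>ys\<in>Gp C ind x y. \<Sum>r\<in>{1..length ys - 1}. Pt ys r) = 0"
proof -
  define T3 where "T3 = (SIGMA ys:Gp C ind x y. {1..length ys} \<times> C)"
  define T3' where "T3' = {w \<in> T3. case w of (ys, r, z) \<Rightarrow> ind (ys ! (r - 1)) < ind z \<and> ind z < ind (ul ys r)}"
  define PS where "PS = (SIGMA ys:Gp C ind x y. {1..length ys - 1})"
  have fG: "finite (Gp C ind x y)" using fin by (rule finite_Gp)
  have fT3: "finite T3" unfolding T3_def using fG fin by auto
  have S1: "(\<Sum>ys\<in>Gp C ind x y. \<Sum>r\<in>{1..length ys}. \<Sum>z\<in>C. Dt ys r z) = (\<Sum>(ys, r, z)\<in>T3. Dt ys r z)"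
  proof -
    have "(\<Sum>ys\<in>Gp C ind x y. \<Sum>r\<in>{1..length ys}. \<Sum>z\<in>C. Dt ys r z) = (\<Sum>ys\<in>Gp C ind x y. \<Sum>(r, z)\<in>{1..length ys} \<times> C. Dt ys r z)"
      by (simp add: sum.cartesian_product)
    also have "\<dots> = (\<Sum>(ys, w)\<in>T3. case w of (r, z) \<Rightarrow> Dt ys r z)"
      unfolding T3_def by (rule sum.Sigma) (use fG fin in auto)
    finally show ?thesis by (simp add: case_prod_beta)
  qed
  have S2: "(\<Sum>(ys, r, z)\<in>T3. Dt ys r z) = (\<Sum>(ys, r, z)\<in>T3'. Dt ys r z)"
  proof (rule sum.mono_neutral_right[OF fT3])
    show "T3' \<subseteq> T3" by (auto simp: T3'_def)
    show "\<forall>w\<in>T3 - T3'. (case w of (ys, r, z) \<Rightarrow> Dt ys r z) = 0"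
    proof
      fix w assume w: "w \<in> T3 - T3'"
      then have wT: "w \<in> T3" and nw: "w \<notin> T3'" by auto
      then obtain ys r z where w': "w = (ys, r, z)" and ys: "ys \<in> Gp C ind x y" and r: "1 \<le> r" "r \<le> length ys"
        and z: "z \<in> C"
        by (auto simp: T3_def)
      have nb: "\<not> (ind (ys ! (r - 1)) < ind z \<and> ind z < ind (ul ys r))"
        using nw wT unfolding w' T3'_def by simp
      have sy: "set ys \<subseteq> C" using ys by (simp add: Gp_def)
      have "r - 1 < length ys" using r by simp
      then have "ys ! (r - 1) \<in> set ys" by (rule nth_mem)
      then have vC: "ys ! (r - 1) \<in> C" using sy by blast
      have uC: "ul ys r \<in> C" unfolding ul_def using xC set_take_subset[of "r - 1" ys] sy by (intro last_in) auto
      have "m (ul ys r) z * m z (ys ! (r - 1)) = 0"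
      proof (cases "ind z < ind (ul ys r)")
        case True
        then have "\<not> ind (ys ! (r - 1)) < ind z" using nb by simp
        then have "m z (ys ! (r - 1)) = 0" by (rule m_zero[OF neg mem z vC])
        then show ?thesis by simp
      next
        case False
        then have "m (ul ys r) z = 0" by (rule m_zero[OF neg mem uC z])
        then show ?thesis by simp
      qed
      then show "(case w of (ys, r, z) \<Rightarrow> Dt ys r z) = 0"
        unfolding w' Dt_def using nu_zero_in[OF M] by simp
    qed
  qed
  have S3: "(\<Sum>ys\<in>Gp C ind x y. \<Sum>r\<in>{1..length ys - 1}. Pt ys r) = (\<Sum>(ys, r)\<in>PS. Pt ys r)"
    unfolding PS_def by (rule sum.Sigma) (use fG in auto)
  have S4: "(\<Sum>(ys, r, z)\<in>T3'. Dt ys r z) = (\<Sum>(ys, r)\<in>PS. - Pt ys r)"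
  proof (rule sum.reindex_bij_witness[where j = "\<lambda>(ys, r, z). (take (r - 1) ys @ z # drop (r - 1) ys, r)"
        and i = "\<lambda>(ys, r). (take (r - 1) ys @ drop r ys, r, ys ! (r - 1))"])
    fix w assume w: "w \<in> T3'"
    then obtain ys r z where w': "w = (ys, r, z)" and ys: "ys \<in> Gp C ind x y" and r: "1 \<le> r" "r \<le> length ys"
        and z: "z \<in> C" and bt: "ind (ys ! (r - 1)) < ind z" "ind z < ind (ul ys r)"
        by (auto simp: T3_def T3'_def)
    define k where "k = r - 1"
    have rk: "r = Suc k" using r by (simp add: k_def)
    have r1: "r - 1 = k" by (simp add: k_def)
    have kl: "k < length ys" using r by (simp add: k_def)
    obtain v rest where dr: "drop k ys = v # rest" using kl by (rule ins_facts)
    define ys' where "ys' = take k ys @ z # drop k ys"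
    have F1: "take k (ml m x ys) = ml m x (take k ys)" by (rule ins_ml_facts(1)[OF dr])
    have F2: "drop (k + 1) (ml m x ys) = ml m v rest" by (rule ins_ml_facts(2)[OF dr])
    have F3: "ys ! k = v" by (rule ins_ml_facts(3)[OF dr])
    have F4: "take k (ml m x ys') = ml m x (take k ys)" unfolding ys'_def by (rule ins_ml_facts(4)[OF dr])
    have F5: "ml m x ys' ! k = m (last (x # take k ys)) z" unfolding ys'_def by (rule ins_ml_facts(5)[OF dr])
    have F6: "ml m x ys' ! (k + 1) = m z v" unfolding ys'_def by (rule ins_ml_facts(6)[OF dr])
    have F7: "drop (k + 2) (ml m x ys') = ml m v rest" unfolding ys'_def by (rule ins_ml_facts(7)[OF dr])
    have F8: "take k ys' = take k ys" unfolding ys'_def by (rule ins_ml_facts(8)[OF dr])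
    have F9: "length ys' = length ys + 1" unfolding ys'_def by (rule ins_ml_facts(9)[OF dr])
    note F = F1 F2 F3 F4 F5 F6 F7 F8 F9
    have uk: "ul ys r = last (x # take k ys)" by (simp add: ul_def k_def)
    show "(case case w of (ys, r, z) \<Rightarrow> (take (r - 1) ys @ z # drop (r - 1) ys, r) of
          (ys, r) \<Rightarrow> (take (r - 1) ys @ drop r ys, r, ys ! (r - 1))) = w"
    proof -
      have "take k ys' @ drop r ys' = ys" unfolding rk ys'_def using kl by simp
      moreover have "ys' ! k = z" unfolding ys'_def using kl by (simp add: nth_append)
      ultimately show ?thesis unfolding w' prod.case r1 ys'_def[symmetric] by simp
    qed
    have sy: "set ys \<subseteq> C" "dec ind x ys" "last (x # ys) = y" using ys by (auto simp: Gp_def)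
    have "set ys' \<subseteq> C" unfolding ys'_def using sy(1) z set_take_subset[of k ys] set_drop_subset[of k ys] by auto
    moreover have "dec ind x ys'" unfolding ys'_def dec_ins[OF dr]
      using sy(2) bt F(3) uk by (simp add: k_def)
    moreover have "last (x # ys') = y" unfolding ys'_def last_ins[OF dr] by (rule sy(3))
    ultimately have "ys' \<in> Gp C ind x y" by (simp add: Gp_def)
    then show "(case w of (ys, r, z) \<Rightarrow> (take (r - 1) ys @ z # drop (r - 1) ys, r)) \<in> PS"
      unfolding w' PS_def prod.case r1 ys'_def[symmetric] using F(9) r by simp
    show "(case case w of (ys, r, z) \<Rightarrow> (take (r - 1) ys @ z # drop (r - 1) ys, r) of (ys, r) \<Rightarrow> - Pt ys r) =
          (case w of (ys, r, z) \<Rightarrow> Dt ys r z)"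
    proof -
      have l1: "(case case w of (ys, r, z) \<Rightarrow> (take (r - 1) ys @ z # drop (r - 1) ys, r) of (ys, r) \<Rightarrow> - Pt ys r) = - Pt ys' r"
        unfolding w' prod.case r1 ys'_def[symmetric] ..
      have rr: "r + 1 = k + 2" using rk by simp
      have lst: "take k (ml m x ys') @ (ml m x ys' ! k * ml m x ys' ! (k + 1)) # drop (k + 2) (ml m x ys')
          = ml m x (take k ys) @ (m (last (x # take k ys)) z * m z v) # ml m v rest"
        using F by simp
      have P: "Pt ys' r = sg (spe ind p x ys' + int r) (\<nu> (length ys + 1) \<alpha> (ml m x (take k ys) @ (m (last (x # take k ys)) z * m z v) # ml m v rest))"
        unfolding Pt_def F(9) k_def[symmetric] rr
        using lst rk by simp
      have lst2: "take k (ml m x ys) @ (m (ul ys r) z * m z (ys ! k)) # drop r (ml m x ys)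
          = ml m x (take k ys) @ (m (last (x # take k ys)) z * m z v) # ml m v rest"
        using F rk uk by simp
      have D: "Dt ys r z = sg (spe ind p x ys + int r + int (length ys - r)
          - (p + (int (ind x) - int (ind (ul ys r)) - int k)) + int (ind (ul ys r)) - int (ind z))
          (\<nu> (length ys + 1) \<alpha> (ml m x (take k ys) @ (m (last (x # take k ys)) z * m z v) # ml m v rest))"
        unfolding Dt_def k_def[symmetric] lst2 ..
      have sp: "spe ind p x ys' = spe ind p x ys + p + int (ind x) - int (ind z) - int (length ys)"
        unfolding ys'_def by (rule spe_ins[OF dr])
      have od: "odd ((spe ind p x ys + int r + int (length ys - r)
          - (p + (int (ind x) - int (ind (ul ys r)) - int k)) + int (ind (ul ys r)) - int (ind z)) - (spe ind p x ys' + int r))"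
      proof -
        have "(spe ind p x ys + int r + int (length ys - r)
          - (p + (int (ind x) - int (ind (ul ys r)) - int k)) + int (ind (ul ys r)) - int (ind z)) - (spe ind p x ys' + int r)
          = 2 * (int (length ys) + int (ind (ul ys r)) - p - int (ind x)) - 1" (is "?X = _")
          using sp rk r by (simp add: of_nat_diff algebra_simps)
        then show ?thesis by (simp only:) presburger
      qed
      have "Dt ys r z = - Pt ys' r" unfolding P D by (rule sg_odd[OF od])
      then show ?thesis unfolding w' prod.case r1 ys'_def[symmetric] by simp
    qed
  next
    fix b assume b: "b \<in> PS"
    then obtain ys' r where b': "b = (ys', r)" and ys': "ys' \<in> Gp C ind x y" and r: "1 \<le> r" "r \<le> length ys' - 1"
      by (auto simp: PS_def)
    define k where "k = r - 1"
    have rk: "r = Suc k" using r by (simp add: k_def)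
    have r1: "r - 1 = k" by (simp add: k_def)
    have kl: "k + 1 < length ys'" using r by (simp add: k_def)
    define ys where "ys = take k ys' @ drop r ys'"
    define z where "z = ys' ! k"
    have lys: "length ys = length ys' - 1" unfolding ys_def using kl rk by simp
    have tk: "take k ys = take k ys'" unfolding ys_def using kl by simp
    have dk: "drop k ys = drop r ys'" unfolding ys_def using kl by simp
    have re: "take k ys @ z # drop k ys = ys'"
      unfolding tk dk z_def rk using kl by (simp add: id_take_nth_drop[symmetric])
    show "(case case b of (ys, r) \<Rightarrow> (take (r - 1) ys @ drop r ys, r, ys ! (r - 1)) of
          (ys, r, z) \<Rightarrow> (take (r - 1) ys @ z # drop (r - 1) ys, r)) = b"
      unfolding b' prod.case r1 ys_def[symmetric] z_def[symmetric] using re by simp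
    have kl2: "k < length ys" using kl lys by simp
    obtain v rest where dr: "drop k ys = v # rest" using kl2 by (rule ins_facts)
    have sy: "set ys' \<subseteq> C" "dec ind x ys'" "last (x # ys') = y" using ys' by (auto simp: Gp_def)
    have dd: "dec ind x ys \<and> ind v < ind z \<and> ind z < ind (last (x # take k ys))"
      using sy(2) unfolding re[symmetric] dec_ins[OF dr] .
    have vk: "ys ! k = v" using dr by (rule nth_via_drop)
    have "set ys \<subseteq> set ys'" unfolding ys_def using set_take_subset[of k ys'] set_drop_subset[of r ys'] by auto
    then have "set ys \<subseteq> C" using sy(1) by blast
    moreover have "last (x # ys) = y" using sy(3) unfolding re[symmetric] last_ins[OF dr] .
    ultimately have m1: "ys \<in> Gp C ind x y" using dd by (simp add: Gp_def)
    have zC: "z \<in> C"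
    proof -
      have "k < length ys'" using kl by simp
      then have "ys' ! k \<in> set ys'" by (rule nth_mem)
      then show ?thesis unfolding z_def using sy(1) by blast
    qed
    have m2: "r \<in> {1..length ys}" using r lys by simp
    have m3: "ind (ys ! (r - 1)) < ind z" unfolding r1 vk using dd by simp
    have m4: "ind z < ind (ul ys r)" unfolding ul_def r1 using dd by simp
    have "(ys, r, z) \<in> T3'" unfolding T3'_def T3_def using m1 m2 m3 m4 zC by simp
    then show "(case b of (ys, r) \<Rightarrow> (take (r - 1) ys @ drop r ys, r, ys ! (r - 1))) \<in> T3'"
      by (simp only: b' prod.case r1 ys_def[symmetric] z_def[symmetric])
  qed
  have ng: "(\<Sum>w\<in>PS. case w of (ys, r) \<Rightarrow> - Pt ys r) = - (\<Sum>w\<in>PS. case w of (ys, r) \<Rightarrow> Pt ys r)"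
    unfolding sum_negf[symmetric] by (rule sum.cong) (auto simp: split_def)
  show ?thesis unfolding S1 S2 S3 S4 ng by simp
qed

end


context tw begin

lemma part3:
  assumes yC: "y \<in> C"
  shows "(\<Sum>z\<in>C. twisted_diff C ind m \<nu> (p + int (ind x) - 1 - int (ind z))
                          (twisted_diff C ind m \<nu> p \<alpha> x z) z y) = 0"
proof -
  define P1 where "P1 ys = (\<Sum>s\<in>{1..length ys + 1}. zmult (sgn1 (int s * int (length ys + 1 - s)))
           (\<nu> (length ys + 1 - s + 1) (\<nu> s \<alpha> (take (s - 1) (ml m x ys))) (drop (s - 1) (ml m x ys))))" for ys
  define P2 where "P2 ys = (\<Sum>r\<in>{1..length ys + 1}. \<Sum>s\<in>{1..length ys + 1 - r}. t2 ys r s)" for ys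
  have rel: "\<And>N p \<alpha> gs qs. 1 \<le> N \<Longrightarrow> length gs = N - 1 \<Longrightarrow> \<alpha> \<in> GA p \<Longrightarrow> homog_list GC gs qs \<Longrightarrow>
        ainf_mod_rel d \<nu> N p \<alpha> gs qs = 0"
    using M by (simp add: ainf_module_def)
  have P12: "P1 ys = - P2 ys" if ys: "ys \<in> Gp C ind x y" for ys
  proof -
    have h: "homog_list GC (ml m x ys) (ql ind x ys)"
      using homog_ml[OF mem xC] ys by (simp add: Gp_def)
    have "ainf_mod_rel d \<nu> (length ys + 1) p \<alpha> (ml m x ys) (ql ind x ys) = 0"
      by (rule rel[OF _ _ aG h]) simp_all
    then have "P1 ys + P2 ys = 0" unfolding P1_def P2_def modrel_split .
    then show ?thesis by (simp add: eq_neg_iff_add_eq_0)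
  qed
  have "(\<Sum>z\<in>C. twisted_diff C ind m \<nu> (p + int (ind x) - 1 - int (ind z))
                          (twisted_diff C ind m \<nu> p \<alpha> x z) z y)
     = (\<Sum>ys\<in>Gp C ind x y. sg (spe ind p x ys) (P1 ys))"
    unfolding P1_def by (rule stepA[OF M neg mem fin xC])
  also have "\<dots> = (\<Sum>ys\<in>Gp C ind x y. - sg (spe ind p x ys) (P2 ys))"
    by (rule sum.cong[OF refl]) (simp add: P12 sg_uminus)
  also have "\<dots> = - (\<Sum>ys\<in>Gp C ind x y. sg (spe ind p x ys) (P2 ys))"
    by (simp add: sum_negf)
  also have "(\<Sum>ys\<in>Gp C ind x y. sg (spe ind p x ys) (P2 ys))
     = (\<Sum>ys\<in>Gp C ind x y. (\<Sum>r\<in>{1..length ys}. \<Sum>z\<in>C. Dt ys r z) + (\<Sum>r\<in>{1..length ys - 1}. Pt ys r))"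
  proof (rule sum.cong[OF refl])
    fix ys assume ys: "ys \<in> Gp C ind x y"
    have sy: "set ys \<subseteq> C" using ys by (simp add: Gp_def)
    have "sg (spe ind p x ys) (P2 ys) = (\<Sum>r\<in>{1..length ys}. sg (spe ind p x ys) (t2 ys r 1)) + (\<Sum>r\<in>{1..length ys - 1}. sg (spe ind p x ys) (t2 ys r 2))"
      unfolding P2_def P2_split sg_plus sg_sum ..
    also have "(\<Sum>r\<in>{1..length ys}. sg (spe ind p x ys) (t2 ys r 1)) = (\<Sum>r\<in>{1..length ys}. \<Sum>z\<in>C. Dt ys r z)"
      by (rule sum.cong[OF refl]) (rule t2_1[OF sy], auto)
    also have "(\<Sum>r\<in>{1..length ys - 1}. sg (spe ind p x ys) (t2 ys r 2)) = (\<Sum>r\<in>{1..length ys - 1}. Pt ys r)"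
      by (rule sum.cong[OF refl]) (rule t2_2, auto)
    finally show "sg (spe ind p x ys) (P2 ys) = (\<Sum>r\<in>{1..length ys}. \<Sum>z\<in>C. Dt ys r z) + (\<Sum>r\<in>{1..length ys - 1}. Pt ys r)" .
  qed
  also have "\<dots> = 0" unfolding sum.distrib by (rule cancel)
  finally show ?thesis by simp
qed

end

theorem proposition4p8:
  fixes GC :: "int \<Rightarrow> 'c::ring set" and d :: "'c \<Rightarrow> 'c"
    and Crit :: "'x set" and ind :: "'x \<Rightarrow> nat" and m :: "'x \<Rightarrow> 'x \<Rightarrow> 'c"
    and GA :: "int \<Rightarrow> 'a::ab_group_add set" and \<nu> :: "nat \<Rightarrow> 'a \<Rightarrow> 'c list \<Rightarrow> 'a"
  assumes "ainf_algebra GC d"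
    and "finite Crit"
    and "twisting_cocycle GC d Crit ind m"
    and "ainf_module GC d GA \<nu>"
  shows "(\<forall>p x. \<forall>\<alpha>\<in>GA p. \<forall>\<beta>\<in>GA p. x \<in> Crit \<longrightarrow> (\<forall>y\<in>Crit.
            twisted_diff Crit ind m \<nu> p (\<alpha> + \<beta>) x y
              = twisted_diff Crit ind m \<nu> p \<alpha> x y + twisted_diff Crit ind m \<nu> p \<beta> x y))
       \<and> (\<forall>p x. \<forall>\<alpha>\<in>GA p. x \<in> Crit \<longrightarrow> (\<forall>y\<in>Crit.
            twisted_diff Crit ind m \<nu> p \<alpha> x y \<in> GA (p + int (ind x) - 1 - int (ind y))))
       \<and> (\<forall>p x. \<forall>\<alpha>\<in>GA p. x \<in> Crit \<longrightarrow> (\<forall>y\<in>Crit.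
            (\<Sum>z\<in>Crit. twisted_diff Crit ind m \<nu> (p + int (ind x) - 1 - int (ind z))
                          (twisted_diff Crit ind m \<nu> p \<alpha> x z) z y) = 0))"
proof -
  have M: "ainf_module GC d GA \<nu>" by fact
  have neg: "\<forall>k<0. GC k = {0}" using assms(1) by (simp add: ainf_algebra_def)
  have mem: "\<forall>x\<in>Crit. \<forall>y\<in>Crit. m x y \<in> GC (int (ind x) - int (ind y) - 1)"
    using assms(3) by (simp add: twisting_cocycle_def)
  have cyc: "\<forall>x\<in>Crit. \<forall>y\<in>Crit. d (m x y) = (\<Sum>z\<in>Crit. zmult (sgn1 (int (ind x) - int (ind z))) (m x z * m z y))"
    using assms(3) by (simp add: twisting_cocycle_def)
  have fin: "finite Crit" by fact
  show ?thesis
  proof (intro conjI allI ballI impI)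
    fix p x \<alpha> \<beta> y assume "x \<in> Crit" "y \<in> Crit"
    then show "twisted_diff Crit ind m \<nu> p (\<alpha> + \<beta>) x y
              = twisted_diff Crit ind m \<nu> p \<alpha> x y + twisted_diff Crit ind m \<nu> p \<beta> x y"
      by (intro part1[OF M neg mem fin])
  next
    fix p x \<alpha> y assume "\<alpha> \<in> GA p" "x \<in> Crit" "y \<in> Crit"
    then show "twisted_diff Crit ind m \<nu> p \<alpha> x y \<in> GA (p + int (ind x) - 1 - int (ind y))"
      by (intro part2[OF M neg mem fin])
  next
    fix p x \<alpha> y assume a: "\<alpha> \<in> GA p" "x \<in> Crit" "y \<in> Crit"
    interpret tw GC d Crit ind m GA \<nu> p \<alpha> x
      using M neg mem cyc fin a by unfold_locales
    show "(\<Sum>z\<in>Crit. twisted_diff Crit ind m \<nu> (p + int (ind x) - 1 - int (ind z))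
                          (twisted_diff Crit ind m \<nu> p \<alpha> x z) z y) = 0"
      by (rule part3[OF a(3)])
  qed
qed

end
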